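(* Let $M$ and $N$ be compact metric spaces, $f\colon M\to M$ and $g\colon N\to N$ homeomorphisms, and $q\colon M\to N$ a continuous, surjective, open map with $q\circ f=g\circ q$. If $f$ has the L-shadowing property, then $g$ has the L-shadowing property.
   Context: A homeomorphism $f$ of a compact metric space $(X,d)$ has the L-shadowing property if for every $\varepsilon>0$ there is $\delta>0$ such that every sequence $(x_k)_{k\in\mathbb{Z}}$ with $d(f(x_k),x_{k+1})\le\delta$ for all $k$ and $d(f(x_k),x_{k+1})\to0$ as $|k|\to\infty$ admits $z$ with $d(f^k(z),x_k)\le\varepsilon$ for all $k$ and $d(f^k(z),x_k)\to0$ as $|k|\to\infty$. *)

theory Defs
  imports "HOL-Analysis.Analysis"
begin

definition is_homeo_of :: "'a::metric_space set \<Rightarrow> ('a \<Rightarrow> 'a) \<Rightarrow> bool" where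
  "is_homeo_of X f \<longleftrightarrow> (\<exists>g. homeomorphism X X f g)"

definition zpow :: "'a set \<Rightarrow> ('a \<Rightarrow> 'a) \<Rightarrow> int \<Rightarrow> 'a \<Rightarrow> 'a" where
  "zpow X f k = (if 0 \<le> k then f ^^ nat k else inv_into X f ^^ nat (- k))"

definition L_shadowing :: "'a::metric_space set \<Rightarrow> ('a \<Rightarrow> 'a) \<Rightarrow> bool" where
  "L_shadowing X f \<longleftrightarrow>
    (\<forall>\<epsilon>>0. \<exists>\<delta>>0. \<forall>x :: int \<Rightarrow> 'a.
       (\<forall>k. x k \<in> X) \<and>
       (\<forall>k. dist (f (x k)) (x (k + 1)) \<le> \<delta>) \<and>
       ((\<lambda>k. dist (f (x k)) (x (k + 1))) \<longlongrightarrow> 0) at_top \<and>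
       ((\<lambda>k. dist (f (x k)) (x (k + 1))) \<longlongrightarrow> 0) at_bot
       \<longrightarrow> (\<exists>z\<in>X. (\<forall>k. dist (zpow X f k z) (x k) \<le> \<epsilon>) \<and>
              ((\<lambda>k. dist (zpow X f k z) (x k)) \<longlongrightarrow> 0) at_top \<and>
              ((\<lambda>k. dist (zpow X f k z) (x k)) \<longlongrightarrow> 0) at_bot))"

end

theory Submission
  imports Defs
begin

lemma unif_cont_mod:
  fixes q :: "'a::metric_space \<Rightarrow> 'b::metric_space"
  assumes "compact M" "continuous_on M q"
  shows "\<exists>\<omega>. \<forall>\<eta>>0. \<omega> \<eta> > (0::real) \<and> (\<forall>a\<in>M. \<forall>b\<in>M. dist a b < \<omega> \<eta> \<longrightarrow> dist (q a) (q b) < \<eta>)"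
proof -
  have "uniformly_continuous_on M q" using assms compact_uniformly_continuous by blast
  then have "\<forall>\<eta>>0. \<exists>d>0. \<forall>a\<in>M. \<forall>b\<in>M. dist a b < d \<longrightarrow> dist (q a) (q b) < \<eta>"
    unfolding uniformly_continuous_on_def by (metis dist_commute)
  then show ?thesis by metis
qed

lemma homeo_inv:
  assumes "is_homeo_of X f"
  shows "homeomorphism X X f (inv_into X f)"
proof -
  obtain g where h: "homeomorphism X X f g" using assms unfolding is_homeo_of_def by blast
  have inj: "inj_on f X" using h unfolding homeomorphism_def by (metis inj_on_inverseI)
  have eq: "\<forall>y\<in>X. inv_into X f y = g y"
  proof
    fix y assume y: "y \<in> X"
    have "g y \<in> X" "f (g y) = y" using h y unfolding homeomorphism_def by auto
    then show "inv_into X f y = g y" using inv_into_f_f[OF inj] by metis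
  qed
  have "continuous_on X (inv_into X f)"
    using h continuous_on_cong eq unfolding homeomorphism_def by (metis (no_types, lifting))
  moreover have "inv_into X f ` X = X" using eq h unfolding homeomorphism_def by auto
  ultimately show ?thesis using h eq inv_into_f_f[OF inj] unfolding homeomorphism_def by auto
qed

lemma tends_transfer:
  fixes D E :: "'i \<Rightarrow> real"
  assumes "(D \<longlongrightarrow> 0) F" "\<forall>\<eta>>0. \<Theta> \<eta> > 0" "\<forall>\<eta>>0. \<forall>k. D k < \<Theta> \<eta> \<longrightarrow> E k < \<eta>"
    "\<forall>k. E k \<ge> 0"
  shows "(E \<longlongrightarrow> 0) F"
  unfolding tendsto_iff
proof (intro allI impI)
  fix e :: real assume e: "e > 0"
  have "eventually (\<lambda>k. dist (D k) 0 < \<Theta> e) F"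
    using assms(1) assms(2) e unfolding tendsto_iff by blast
  then show "eventually (\<lambda>k. dist (E k) 0 < e) F"
    apply (rule eventually_mono)
    using assms(3,4) e by fastforce
qed

lemma iter_conj:
  assumes "\<forall>x\<in>M. F x \<in> M \<and> G (q x) = q (F x)" "z \<in> M"
  shows "(F ^^ n) z \<in> M \<and> (G ^^ n) (q z) = q ((F ^^ n) z)"
  using assms by (induction n) auto

lemma zpow_conj:
  assumes "is_homeo_of M f" "is_homeo_of N g" "q ` M = N"
    "\<And>x. x \<in> M \<Longrightarrow> q (f x) = g (q x)" "z \<in> M"
  shows "zpow M f i z \<in> M \<and> zpow N g i (q z) = q (zpow M f i z)"
proof -
  have hf: "homeomorphism M M f (inv_into M f)" using homeo_inv assms(1) by blast
  have hg: "homeomorphism N N g (inv_into N g)" using homeo_inv assms(2) by blast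
  have A: "\<forall>x\<in>M. f x \<in> M \<and> g (q x) = q (f x)" using hf assms(4) unfolding homeomorphism_def by auto
  have B: "\<forall>x\<in>M. inv_into M f x \<in> M \<and> inv_into N g (q x) = q (inv_into M f x)"
  proof
    fix x assume x: "x \<in> M"
    have hx: "inv_into M f x \<in> M" "f (inv_into M f x) = x" using hf x unfolding homeomorphism_def by auto
    have "q (inv_into M f x) \<in> N" using hx assms(3) by auto
    moreover have "q x = g (q (inv_into M f x))" using hx assms(4) by metis
    ultimately show "inv_into M f x \<in> M \<and> inv_into N g (q x) = q (inv_into M f x)"
      using hg hx unfolding homeomorphism_def by auto
  qed
  show ?thesis
    unfolding zpow_def using iter_conj[OF A assms(5)] iter_conj[OF B assms(5)] by auto
qed

lemma unif_open:
  fixes q :: "'a::metric_space \<Rightarrow> 'b::metric_space"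
  assumes "compact M" "continuous_on M q" "q ` M = N"
    and opn: "\<And>U. openin (top_of_set M) U \<Longrightarrow> openin (top_of_set N) (q ` U)"
    and eta: "\<eta> > 0"
  shows "\<exists>\<rho>>0. \<forall>a\<in>M. \<forall>y'\<in>N. dist (q a) y' < \<rho> \<longrightarrow> (\<exists>u\<in>M. q u = y' \<and> dist a u < \<eta>)"
proof -
  have "\<forall>a\<in>M. \<exists>r>0. \<forall>y'\<in>N. dist y' (q a) < r \<longrightarrow> y' \<in> q ` (M \<inter> ball a (\<eta>/2))"
  proof
    fix a assume a: "a \<in> M"
    have "openin (top_of_set M) (M \<inter> ball a (\<eta>/2))" by (simp add: openin_open_Int)
    then have o: "openin (top_of_set N) (q ` (M \<inter> ball a (\<eta>/2)))" by (rule opn)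
    have "q a \<in> q ` (M \<inter> ball a (\<eta>/2))" using a eta by auto
    then show "\<exists>r>0. \<forall>y'\<in>N. dist y' (q a) < r \<longrightarrow> y' \<in> q ` (M \<inter> ball a (\<eta>/2))"
      using o unfolding openin_euclidean_subtopology_iff by blast
  qed
  then obtain R where R: "\<forall>a\<in>M. R a > 0 \<and> (\<forall>y'\<in>N. dist y' (q a) < R a \<longrightarrow> y' \<in> q ` (M \<inter> ball a (\<eta>/2)))"
    by metis
  have "\<forall>a\<in>M. \<exists>s>0. \<forall>x\<in>M. dist x a < s \<longrightarrow> dist (q x) (q a) < R a / 2"
    using assms(2) R unfolding continuous_on_iff by (meson half_gt_zero)
  then obtain S where S: "\<forall>a\<in>M. S a > 0 \<and> (\<forall>x\<in>M. dist x a < S a \<longrightarrow> dist (q x) (q a) < R a / 2)"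
    by metis
  have cov: "M \<subseteq> (\<Union>a\<in>M. ball a (min (S a) (\<eta>/2)))"
    using S eta by force
  obtain T where T: "T \<subseteq> M" "finite T" "M \<subseteq> (\<Union>a\<in>T. ball a (min (S a) (\<eta>/2)))"
    using compactE_image[OF assms(1) _ cov] by blast
  define \<rho> where "\<rho> = Min (insert 1 ((\<lambda>a. R a / 2) ` T))"
  have fin: "finite (insert 1 ((\<lambda>a. R a / 2) ` T))" using T by auto
  have "\<rho> > 0" unfolding \<rho>_def using fin R T(1) by (subst Min_gr_iff) auto
  moreover have "\<forall>a\<in>M. \<forall>y'\<in>N. dist (q a) y' < \<rho> \<longrightarrow> (\<exists>u\<in>M. q u = y' \<and> dist a u < \<eta>)"
  proof (intro ballI impI)
    fix a y' assume a: "a \<in> M" and y': "y' \<in> N" and d: "dist (q a) y' < \<rho>"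
    obtain t where t: "t \<in> T" "a \<in> ball t (min (S t) (\<eta>/2))" using T(3) a by blast
    have tM: "t \<in> M" using t T by auto
    have "\<rho> \<le> R t / 2" unfolding \<rho>_def using fin t by (intro Min_le) auto
    have "dist a t < S t" using t(2) by (simp add: dist_commute)
    then have "dist (q a) (q t) < R t / 2" using S tM a by blast
    moreover note \<open>\<rho> \<le> R t / 2\<close>
    ultimately have "dist y' (q t) < R t"
      using d dist_triangle[of y' "q t" "q a"] by (simp add: dist_commute)
    then have "y' \<in> q ` (M \<inter> ball t (\<eta>/2))" using R tM y' by blast
    then obtain u where u: "u \<in> M" "dist t u < \<eta>/2" "q u = y'" by auto
    have "dist a u < \<eta>" using u t(2) dist_triangle[of a u t] by (simp add: dist_commute)
    then show "\<exists>u\<in>M. q u = y' \<and> dist a u < \<eta>" using u by blast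
  qed
  ultimately show ?thesis by blast
qed

primrec gen :: "('a \<Rightarrow> 'a) \<Rightarrow> ('a \<Rightarrow> 'b \<Rightarrow> 'a) \<Rightarrow> (nat \<Rightarrow> 'b) \<Rightarrow> 'a \<Rightarrow> nat \<Rightarrow> 'a" where
  "gen \<Phi> L s x0 0 = x0"
| "gen \<Phi> L s x0 (Suc n) = L (\<Phi> (gen \<Phi> L s x0 n)) (s n)"

lemma lifting:
  fixes M :: "'a::metric_space set" and N :: "'b::metric_space set"
    and f :: "'a \<Rightarrow> 'a" and g :: "'b \<Rightarrow> 'b" and q :: "'a \<Rightarrow> 'b"
  assumes cM: "compact M" and cN: "compact N"
    and hfa: "is_homeo_of M f" and hga: "is_homeo_of N g"
    and qc: "continuous_on M q" and qM: "q ` M = N"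
    and opn: "\<And>U. openin (top_of_set M) U \<Longrightarrow> openin (top_of_set N) (q ` U)"
    and cj: "\<And>x. x \<in> M \<Longrightarrow> q (f x) = g (q x)"
  shows "\<exists>\<Theta>. (\<forall>\<eta>>0. \<Theta> \<eta> > (0::real)) \<and> (\<forall>y :: int \<Rightarrow> 'b. (\<forall>k. y k \<in> N) \<longrightarrow> (\<exists>x. (\<forall>k. x k \<in> M \<and> q (x k) = y k) \<and>
      (\<forall>\<eta>>0. \<forall>k. dist (g (y k)) (y (k+1)) < \<Theta> \<eta> \<longrightarrow> dist (f (x k)) (x (k+1)) < \<eta>)))"
proof -
  have "\<forall>\<eta>>0. \<exists>\<rho>>0. \<forall>a\<in>M. \<forall>y'\<in>N. dist (q a) y' < \<rho> \<longrightarrow> (\<exists>u\<in>M. q u = y' \<and> dist a u < \<eta>)"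
    using unif_open[OF cM qc qM opn] by blast
  then obtain \<rho> where \<rho>: "\<forall>\<eta>>0. \<rho> \<eta> > 0 \<and> (\<forall>a\<in>M. \<forall>y'\<in>N. dist (q a) y' < \<rho> \<eta> \<longrightarrow> (\<exists>u\<in>M. q u = y' \<and> dist a u < \<eta>))"
    by metis
  define L where "L a y' = (SOME u. u \<in> M \<and> q u = y' \<and> (\<forall>v\<in>M. q v = y' \<longrightarrow> dist a u \<le> dist a v))" for a y'
  have L: "L a y' \<in> M \<and> q (L a y') = y' \<and> (\<forall>v\<in>M. q v = y' \<longrightarrow> dist a (L a y') \<le> dist a v)"
    if y': "y' \<in> N" for a y'
  proof -
    have cl: "closedin (top_of_set M) {x \<in> M. q x = y'}"
      using continuous_closedin_preimage_constant[OF qc] by blast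
    have "compact {x \<in> M. q x = y'}" using closedin_compact[OF cM cl] .
    moreover have "{x \<in> M. q x = y'} \<noteq> {}" using y' qM by auto
    moreover have "continuous_on {x \<in> M. q x = y'} (dist a)" by (intro continuous_intros)
    ultimately obtain u where "u \<in> {x \<in> M. q x = y'}" "\<forall>v\<in>{x \<in> M. q x = y'}. dist a u \<le> dist a v"
      using continuous_attains_inf by blast
    then have "\<exists>u. u \<in> M \<and> q u = y' \<and> (\<forall>v\<in>M. q v = y' \<longrightarrow> dist a u \<le> dist a v)" by auto
    then show ?thesis unfolding L_def by (rule someI_ex)
  qed
  have Lclose: "dist a (L a y') < \<eta>"
    if as: "a \<in> M" "y' \<in> N" "\<eta> > 0" "dist (q a) y' < \<rho> \<eta>" for a y' \<eta>
  proof -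
    obtain u where "u \<in> M" "q u = y'" "dist a u < \<eta>" using \<rho> as by blast
    then show ?thesis using L[OF as(2), of a] by fastforce
  qed
  have hf: "homeomorphism M M f (inv_into M f)" using homeo_inv hfa by blast
  have hg: "homeomorphism N N g (inv_into N g)" using homeo_inv hga by blast
  define h where "h = inv_into M f"
  define kk where "kk = inv_into N g"
  have hf': "\<forall>x\<in>M. f x \<in> M \<and> h x \<in> M \<and> f (h x) = x \<and> h (f x) = x"
    using hf unfolding homeomorphism_def h_def by auto
  have hg': "\<forall>x\<in>N. g x \<in> N \<and> kk x \<in> N \<and> g (kk x) = x \<and> kk (g x) = x"
    using hg unfolding homeomorphism_def kk_def by auto
  have qh: "q (h x) = kk (q x)" if "x \<in> M" for x
  proof -
    have "q x = g (q (h x))" using hf' cj that by metis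
    moreover have "q (h x) \<in> N" using hf' that qM by auto
    ultimately show ?thesis using hg' by metis
  qed
  obtain \<omega> where \<omega>: "\<forall>\<eta>>0. \<omega> \<eta> > (0::real) \<and> (\<forall>a\<in>M. \<forall>b\<in>M. dist a b < \<omega> \<eta> \<longrightarrow> dist (f a) (f b) < \<eta>)"
    using unif_cont_mod[OF cM] hf unfolding homeomorphism_def by metis
  obtain \<omega>' where \<omega>': "\<forall>\<eta>>0. \<omega>' \<eta> > (0::real) \<and> (\<forall>a\<in>N. \<forall>b\<in>N. dist a b < \<omega>' \<eta> \<longrightarrow> dist (kk a) (kk b) < \<eta>)"
    using unif_cont_mod[OF cN] hg unfolding homeomorphism_def kk_def by metis
  define \<Theta> where "\<Theta> \<eta> = min (\<rho> \<eta>) (\<omega>' (\<rho> (\<omega> \<eta>)))" for \<eta>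
  have \<Theta>pos: "\<forall>\<eta>>0. \<Theta> \<eta> > 0" unfolding \<Theta>_def using \<rho> \<omega> \<omega>' by auto
  have main: "\<exists>x. (\<forall>k. x k \<in> M \<and> q (x k) = y k) \<and>
      (\<forall>\<eta>>0. \<forall>k. dist (g (y k)) (y (k+1)) < \<Theta> \<eta> \<longrightarrow> dist (f (x k)) (x (k+1)) < \<eta>)"
    if yN: "\<forall>k. y k \<in> N" for y :: "int \<Rightarrow> 'b"
  proof -
    obtain x0 where x0: "x0 \<in> M" "q x0 = y 0" using yN qM by (metis imageE)
    define Fw where "Fw = gen f L (\<lambda>n. y (int n + 1)) x0"
    define Bw where "Bw = gen h L (\<lambda>n. y (- int (Suc n))) x0"
    have Fw: "Fw n \<in> M \<and> q (Fw n) = y (int n)" for n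
      unfolding Fw_def using L yN x0 by (induction n) (auto simp: add.commute)
    have Bw: "Bw n \<in> M \<and> q (Bw n) = y (- int n)" for n
      unfolding Bw_def using L yN x0 by (induction n) auto
    define x where "x k = (if 0 \<le> k then Fw (nat k) else Bw (nat (-k)))" for k
    have xl: "\<forall>k. x k \<in> M \<and> q (x k) = y k" unfolding x_def using Fw Bw by auto
    have "dist (f (x k)) (x (k+1)) < \<eta>" if \<eta>: "\<eta> > 0" and d: "dist (g (y k)) (y (k+1)) < \<Theta> \<eta>" for \<eta> k
    proof (cases "0 \<le> k")
      case True
      then obtain n where n: "k = int n" by (metis nonneg_eq_int)
      have xk: "x k = Fw n" unfolding x_def using n by simp
      have xk1: "x (k+1) = L (f (Fw n)) (y (int n + 1))"
      proof -
        have "nat (int n + 1) = Suc n" by simp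
        then show ?thesis unfolding x_def using n by (simp add: Fw_def)
      qed
      have "q (f (Fw n)) = g (y k)" using cj Fw n by metis
      then have "dist (q (f (Fw n))) (y (int n + 1)) < \<rho> \<eta>" using d n unfolding \<Theta>_def by simp
      moreover have "f (Fw n) \<in> M" using hf' Fw by blast
      moreover have "y (int n + 1) \<in> N" using yN by blast
      ultimately have "dist (f (Fw n)) (L (f (Fw n)) (y (int n + 1))) < \<eta>" using Lclose \<eta> by blast
      then show ?thesis using xk xk1 by simp
    next
      case False
      define n where "n = nat (-k - 1)"
      have n: "k = - int n - 1" using False unfolding n_def by simp
      have xk: "x k = L (h (Bw n)) (y k)"
      proof -
        have e: "nat (-k) = Suc n" using n by simp
        have e2: "- int (Suc n) = k" using n by simp
        have "x k = Bw (Suc n)" unfolding x_def using False e by simp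
        also have "\<dots> = L (h (Bw n)) (y (- int (Suc n)))" unfolding Bw_def by simp
        finally show ?thesis unfolding e2 .
      qed
      have xk1: "x (k+1) = Bw n"
      proof (cases "n = 0")
        case True
        then show ?thesis unfolding x_def using n by (simp add: Bw_def Fw_def)
      next
        case False
        have "k + 1 = - int n" using n by simp
        moreover have "\<not> 0 \<le> - int n" using False by simp
        ultimately show ?thesis unfolding x_def by simp
      qed
      have BwM: "Bw n \<in> M" using Bw by blast
      have e1: "q (h (Bw n)) = kk (y (k+1))" using qh[OF BwM] Bw n by simp
      have e2: "kk (g (y k)) = y k" using hg' yN by blast
      have "dist (y (k+1)) (g (y k)) < \<omega>' (\<rho> (\<omega> \<eta>))" using d unfolding \<Theta>_def by (simp add: dist_commute)
      moreover have pw: "\<rho> (\<omega> \<eta>) > 0" using \<rho> \<omega> \<eta> by blast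
      moreover have "y (k+1) \<in> N" "g (y k) \<in> N" using yN hg' by auto
      ultimately have "dist (kk (y (k+1))) (kk (g (y k))) < \<rho> (\<omega> \<eta>)"
        using \<omega>' by blast
      then have "dist (q (h (Bw n))) (y k) < \<rho> (\<omega> \<eta>)" using e1 e2 by simp
      moreover have "h (Bw n) \<in> M" using hf' BwM by blast
      moreover have "y k \<in> N" using yN by blast
      moreover have "\<omega> \<eta> > 0" using \<omega> \<eta> by blast
      ultimately have "dist (h (Bw n)) (L (h (Bw n)) (y k)) < \<omega> \<eta>" using Lclose by blast
      then have "dist (h (Bw n)) (x k) < \<omega> \<eta>" using xk by simp
      moreover have "x k \<in> M" using xl by blast
      ultimately have "dist (f (h (Bw n))) (f (x k)) < \<eta>" using \<omega> \<eta> \<open>h (Bw n) \<in> M\<close> by blast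
      then show ?thesis using xk1 hf' BwM by (simp add: dist_commute)
    qed
    then show ?thesis using xl by blast
  qed
  show ?thesis using \<Theta>pos main by blast
qed

theorem mainTheorem15:
  fixes M :: "'a::metric_space set" and N :: "'b::metric_space set"
    and f :: "'a \<Rightarrow> 'a" and g :: "'b \<Rightarrow> 'b" and q :: "'a \<Rightarrow> 'b"
  assumes "compact M" and "compact N"
    and "is_homeo_of M f" and "is_homeo_of N g"
    and "continuous_on M q" and "q ` M = N"
    and "\<And>U. openin (top_of_set M) U \<Longrightarrow> openin (top_of_set N) (q ` U)"
    and "\<And>x. x \<in> M \<Longrightarrow> q (f x) = g (q x)"
    and "L_shadowing M f"
  shows "L_shadowing N g"
proof -
  obtain \<Theta> where \<Theta>: "\<forall>\<eta>>0. \<Theta> \<eta> > (0::real)"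
    and lift: "\<And>y :: int \<Rightarrow> 'b. (\<forall>k. y k \<in> N) \<Longrightarrow> (\<exists>x. (\<forall>k. x k \<in> M \<and> q (x k) = y k) \<and>
      (\<forall>\<eta>>0. \<forall>k. dist (g (y k)) (y (k+1)) < \<Theta> \<eta> \<longrightarrow> dist (f (x k)) (x (k+1)) < \<eta>))"
    using lifting[OF assms(1-8)] by blast
  obtain \<omega> where \<omega>: "\<forall>\<eta>>0. \<omega> \<eta> > (0::real) \<and> (\<forall>a\<in>M. \<forall>b\<in>M. dist a b < \<omega> \<eta> \<longrightarrow> dist (q a) (q b) < \<eta>)"
    using unif_cont_mod[OF assms(1,5)] by blast
  show ?thesis unfolding L_shadowing_def
  proof (intro allI impI)
    fix \<epsilon> :: real assume \<epsilon>: "\<epsilon> > 0"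
    have w\<epsilon>: "\<omega> \<epsilon> > 0" using \<omega> \<epsilon> by blast
    then have pos: "\<omega> \<epsilon> / 2 > 0" by simp
    obtain \<delta>' where \<delta>': "\<delta>' > 0" and sh: "\<And>x :: int \<Rightarrow> 'a.
       (\<forall>k. x k \<in> M) \<and>
       (\<forall>k. dist (f (x k)) (x (k + 1)) \<le> \<delta>') \<and>
       ((\<lambda>k. dist (f (x k)) (x (k + 1))) \<longlongrightarrow> 0) at_top \<and>
       ((\<lambda>k. dist (f (x k)) (x (k + 1))) \<longlongrightarrow> 0) at_bot
       \<Longrightarrow> (\<exists>z\<in>M. (\<forall>k. dist (zpow M f k z) (x k) \<le> \<omega> \<epsilon> / 2) \<and>
              ((\<lambda>k. dist (zpow M f k z) (x k)) \<longlongrightarrow> 0) at_top \<and>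
              ((\<lambda>k. dist (zpow M f k z) (x k)) \<longlongrightarrow> 0) at_bot)"
      using assms(9)[unfolded L_shadowing_def, rule_format, OF pos] by blast
    show "\<exists>\<delta>>0. \<forall>y :: int \<Rightarrow> 'b.
       (\<forall>k. y k \<in> N) \<and>
       (\<forall>k. dist (g (y k)) (y (k + 1)) \<le> \<delta>) \<and>
       ((\<lambda>k. dist (g (y k)) (y (k + 1))) \<longlongrightarrow> 0) at_top \<and>
       ((\<lambda>k. dist (g (y k)) (y (k + 1))) \<longlongrightarrow> 0) at_bot
       \<longrightarrow> (\<exists>z\<in>N. (\<forall>k. dist (zpow N g k z) (y k) \<le> \<epsilon>) \<and>
              ((\<lambda>k. dist (zpow N g k z) (y k)) \<longlongrightarrow> 0) at_top \<and>
              ((\<lambda>k. dist (zpow N g k z) (y k)) \<longlongrightarrow> 0) at_bot)"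
    proof (intro exI[of _ "\<Theta> \<delta>' / 2"] conjI allI impI)
      show "\<Theta> \<delta>' / 2 > 0" using \<Theta> \<delta>' by simp
      fix y :: "int \<Rightarrow> 'b"
      assume A: "(\<forall>k. y k \<in> N) \<and>
       (\<forall>k. dist (g (y k)) (y (k + 1)) \<le> \<Theta> \<delta>' / 2) \<and>
       ((\<lambda>k. dist (g (y k)) (y (k + 1))) \<longlongrightarrow> 0) at_top \<and>
       ((\<lambda>k. dist (g (y k)) (y (k + 1))) \<longlongrightarrow> 0) at_bot"
      obtain x where xl: "\<forall>k. x k \<in> M \<and> q (x k) = y k"
        and xd: "\<forall>\<eta>>0. \<forall>k. dist (g (y k)) (y (k+1)) < \<Theta> \<eta> \<longrightarrow> dist (f (x k)) (x (k+1)) < \<eta>"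
        using lift A by blast
      have T0: "\<Theta> \<delta>' > 0" using \<Theta> \<delta>' by blast
      have A2: "dist (g (y k)) (y (k + 1)) \<le> \<Theta> \<delta>' / 2" for k using A by blast
      have A3: "((\<lambda>k. dist (g (y k)) (y (k + 1))) \<longlongrightarrow> 0) at_top" using A by blast
      have A4: "((\<lambda>k. dist (g (y k)) (y (k + 1))) \<longlongrightarrow> 0) at_bot" using A by blast
      have X1: "\<forall>k. dist (f (x k)) (x (k + 1)) \<le> \<delta>'"
      proof
        fix k
        have "dist (g (y k)) (y (k + 1)) < \<Theta> \<delta>'" using A2[of k] T0 by linarith
        then have "dist (f (x k)) (x (k + 1)) < \<delta>'" using xd \<delta>' by blast
        then show "dist (f (x k)) (x (k + 1)) \<le> \<delta>'" by simp
      qed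
      have X2: "((\<lambda>k. dist (f (x k)) (x (k + 1))) \<longlongrightarrow> 0) at_top"
        by (rule tends_transfer[OF A3 \<Theta>]) (use xd in auto)
      have X3: "((\<lambda>k. dist (f (x k)) (x (k + 1))) \<longlongrightarrow> 0) at_bot"
        by (rule tends_transfer[OF A4 \<Theta>]) (use xd in auto)
      have X0: "\<forall>k. x k \<in> M" using xl by blast
      obtain z where zM: "z \<in> M"
        and z1: "\<forall>k. dist (zpow M f k z) (x k) \<le> \<omega> \<epsilon> / 2"
        and z2: "((\<lambda>k. dist (zpow M f k z) (x k)) \<longlongrightarrow> 0) at_top"
        and z3: "((\<lambda>k. dist (zpow M f k z) (x k)) \<longlongrightarrow> 0) at_bot"
        using sh[of x, OF conjI[OF X0 conjI[OF X1 conjI[OF X2 X3]]]] by blast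
      have cj: "zpow M f k z \<in> M \<and> zpow N g k (q z) = q (zpow M f k z)" for k
        using zpow_conj[OF assms(3,4,6,8) zM] by blast
      have eqd: "dist (zpow N g k (q z)) (y k) = dist (q (zpow M f k z)) (q (x k))" for k
        using cj[of k] xl by simp
      have qzN: "q z \<in> N" using zM assms(6) by blast
      have b: "\<forall>\<eta>>0. \<forall>k. dist (zpow M f k z) (x k) < \<omega> \<eta> \<longrightarrow> dist (zpow N g k (q z)) (y k) < \<eta>"
      proof (intro allI impI)
        fix \<eta> :: real and k assume "\<eta> > 0" "dist (zpow M f k z) (x k) < \<omega> \<eta>"
        moreover have "zpow M f k z \<in> M" "x k \<in> M" using cj xl by auto
        ultimately have "dist (q (zpow M f k z)) (q (x k)) < \<eta>" using \<omega> by blast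
        then show "dist (zpow N g k (q z)) (y k) < \<eta>" using eqd by simp
      qed
      have "\<forall>k. dist (zpow N g k (q z)) (y k) \<le> \<epsilon>"
      proof
        fix k
        have "dist (zpow M f k z) (x k) \<le> \<omega> \<epsilon> / 2" using z1 by blast
        then have "dist (zpow M f k z) (x k) < \<omega> \<epsilon>" using w\<epsilon> by linarith
        then have "dist (zpow N g k (q z)) (y k) < \<epsilon>" using b \<epsilon> by blast
        then show "dist (zpow N g k (q z)) (y k) \<le> \<epsilon>" by simp
      qed
      moreover have "((\<lambda>k. dist (zpow N g k (q z)) (y k)) \<longlongrightarrow> 0) at_top"
        by (rule tends_transfer[OF z2 _ b]) (use \<omega> in auto)
      moreover have "((\<lambda>k. dist (zpow N g k (q z)) (y k)) \<longlongrightarrow> 0) at_bot"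
        by (rule tends_transfer[OF z3 _ b]) (use \<omega> in auto)
      ultimately show "\<exists>z\<in>N. (\<forall>k. dist (zpow N g k z) (y k) \<le> \<epsilon>) \<and>
              ((\<lambda>k. dist (zpow N g k z) (y k)) \<longlongrightarrow> 0) at_top \<and>
              ((\<lambda>k. dist (zpow N g k z) (y k)) \<longlongrightarrow> 0) at_bot"
        using qzN by blast
    qed
  qed
qed

end
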